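(* Let $W:\mathcal X\to\mathcal Y$ be a cyclo-symmetric DMC with $|\mathcal Y|>2|\mathcal X|$, let $L\ge2|\mathcal X|$ be a multiple of $|\mathcal X|$, and let the input distribution be uniform, $\pi(x)=1/|\mathcal X|$. Then $$\min\big\{I(W)-I(Q):\ Q\preccurlyeq W,\ |Q|\le L,\ Q\text{ cyclo-symmetric}\big\}\le \nu(|\mathcal X|)\,L^{-\frac{2}{|\mathcal X|-1}}.$$
   Context: $I(\cdot)$ is input–output mutual information (natural log) under the given input distribution. $Q\preccurlyeq W$ means there is a channel $\Phi$ from the output alphabet of $W$ to that of $Q$ with $Q(z|x)=\sum_yW(y|x)\Phi(z|y)$; $|Q|$ is the output alphabet size of $Q$. A channel $W:\mathcal X\to\mathcal Y$ is cyclo-symmetric if $\mathcal X=\{0,1,\dots,|\mathcal X|-1\}$, $|\mathcal Y|$ is a multiple of $|\mathcal X|$, and $\mathcal Y$ is partitioned into $|\mathcal Y|/|\mathcal X|$ disjoint sets $\mathcal Y_i=\{y_i^{(0)},\dots,y_i^{(|\mathcal X|-1)}\}$ such that $W(y_i^{(0)}|x)=W(y_i^{(\theta)}|x+\theta)$ for all $i$, all $x$ and all $0\le\theta\le|\mathcal X|-1$, with $x+\theta$ taken modulo $|\mathcal X|$. The constant is $$\nu(n)=\frac{\pi n(n-1)}{2\left(\sqrt{1+\frac{1}{2(n-1)}}-1\right)^2}\left(\frac{2n}{\Gamma\!\left(1+\frac{n-1}{2}\right)}\right)^{\frac{2}{n-1}},$$ with $\pi=3.14159\ldots$ and $\Gamma$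 the Gamma function. *)

theory Defs
  imports "HOL-Analysis.Analysis"
begin

text \<open>Input alphabet is {0..<q} (q = |X|); channel W x y = W(y|x), output alphabet a finite set Y.\<close>

definition channel :: "nat \<Rightarrow> 'y set \<Rightarrow> (nat \<Rightarrow> 'y \<Rightarrow> real) \<Rightarrow> bool" where
  "channel q Y W \<longleftrightarrow> finite Y \<and>
     (\<forall>x<q. (\<forall>y\<in>Y. W x y \<ge> 0) \<and> (\<Sum>y\<in>Y. W x y) = 1)"

text \<open>Input-output mutual information (natural log) under input distribution p on {0..<q};
  terms with W x y = 0 contribute 0 (convention 0 ln 0 = 0).\<close>
definition out_prob :: "nat \<Rightarrow> (nat \<Rightarrow> real) \<Rightarrow> (nat \<Rightarrow> 'y \<Rightarrow> real) \<Rightarrow> 'y \<Rightarrow> real" where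
  "out_prob q p W y = (\<Sum>x<q. p x * W x y)"

definition mutual_info :: "nat \<Rightarrow> 'y set \<Rightarrow> (nat \<Rightarrow> real) \<Rightarrow> (nat \<Rightarrow> 'y \<Rightarrow> real) \<Rightarrow> real" where
  "mutual_info q Y p W =
     (\<Sum>x<q. \<Sum>y\<in>Y. p x * W x y * ln (W x y / out_prob q p W y))"

definition uniform :: "nat \<Rightarrow> nat \<Rightarrow> real" where
  "uniform q x = 1 / real q"

definition degraded :: "nat \<Rightarrow> 'y set \<Rightarrow> (nat \<Rightarrow> 'y \<Rightarrow> real) \<Rightarrow> 'z set \<Rightarrow> (nat \<Rightarrow> 'z \<Rightarrow> real) \<Rightarrow> bool" where
  "degraded q Y W Z Q \<longleftrightarrow>
     (\<exists>\<Phi> :: 'y \<Rightarrow> 'z \<Rightarrow> real.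
        (\<forall>y\<in>Y. (\<forall>z\<in>Z. \<Phi> y z \<ge> 0) \<and> (\<Sum>z\<in>Z. \<Phi> y z) = 1) \<and>
        (\<forall>x<q. \<forall>z\<in>Z. Q x z = (\<Sum>y\<in>Y. W x y * \<Phi> y z)))"

definition cyclo_symmetric :: "nat \<Rightarrow> 'y set \<Rightarrow> (nat \<Rightarrow> 'y \<Rightarrow> real) \<Rightarrow> bool" where
  "cyclo_symmetric q Y W \<longleftrightarrow> q dvd card Y \<and>
     (\<exists>(m::nat) (f :: nat \<Rightarrow> nat \<Rightarrow> 'y).
        bij_betw (\<lambda>(i, t). f i t) ({..<m} \<times> {..<q}) Y \<and>
        (\<forall>i<m. \<forall>x<q. \<forall>\<theta><q. W x (f i 0) = W ((x + \<theta>) mod q) (f i \<theta>)))"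

definition nu :: "nat \<Rightarrow> real" where
  "nu n = pi * real n * (real n - 1) /
          (2 * (sqrt (1 + 1 / (2 * (real n - 1))) - 1)^2) *
          (2 * real n / Gamma (1 + (real n - 1) / 2)) powr (2 / (real n - 1))"

end

theory Submission
  imports Defs
begin



lemma sum_sq_card:
  fixes a :: "'b \<Rightarrow> real"
  assumes "finite K"
  shows "(\<Sum>x\<in>K. a x)^2 \<le> real (card K) * (\<Sum>x\<in>K. (a x)^2)"
proof -
  have "0 \<le> (\<Sum>x\<in>K. \<Sum>y\<in>K. (a x - a y)^2)" by (intro sum_nonneg) auto
  also have "\<dots> = (\<Sum>x\<in>K. \<Sum>y\<in>K. (a x)^2 + (a y)^2 - 2 * a x * a y)"
    by (simp add: power2_diff algebra_simps)
  also have "\<dots> = (\<Sum>x\<in>K. real (card K) * (a x)^2 + (\<Sum>y\<in>K. (a y)^2) - 2 * a x * (\<Sum>y\<in>K. a y))"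
    by (intro sum.cong refl) (simp add: sum.distrib sum_subtractf sum_distrib_left)
  also have "\<dots> = real (card K) * (\<Sum>x\<in>K. (a x)^2) + real (card K) * (\<Sum>y\<in>K. (a y)^2) - (\<Sum>x\<in>K. 2 * a x * (\<Sum>y\<in>K. a y))"
    by (simp add: sum.distrib sum_subtractf sum_distrib_left)
  also have "(\<Sum>x\<in>K. 2 * a x * (\<Sum>y\<in>K. a y)) = 2 * (\<Sum>x\<in>K. a x)^2"
    by (simp add: power2_eq_square sum_distrib_right[symmetric] sum_distrib_left[symmetric] mult.assoc)
  finally show ?thesis by simp
qed

lemma var_interval:
  fixes A p :: "'y \<Rightarrow> real"
  assumes "finite S" "\<And>y. y \<in> S \<Longrightarrow> A y \<ge> 0"
    and "\<And>y. y \<in> S \<Longrightarrow> \<alpha> \<le> p y \<and> p y \<le> \<beta>"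
    and "(\<Sum>y\<in>S. A y * p y) = r * T" and "T = (\<Sum>y\<in>S. A y)"
  shows "(\<Sum>y\<in>S. A y * (p y - r)^2) \<le> (r - \<alpha>) * (\<beta> - r) * T"
proof -
  have "(\<Sum>y\<in>S. A y * (p y - r)^2) \<le> (\<Sum>y\<in>S. A y * ((p y - r)^2 + (p y - \<alpha>) * (\<beta> - p y)))"
    using assms(2,3) by (intro sum_mono mult_left_mono) auto
  also have "\<dots> = (\<Sum>y\<in>S. A y * p y * (\<alpha> + \<beta> - 2 * r) + (r^2 - \<alpha> * \<beta>) * A y)"
    by (intro sum.cong refl) (simp add: power2_eq_square algebra_simps)
  also have "\<dots> = (\<Sum>y\<in>S. A y * p y) * (\<alpha> + \<beta> - 2 * r) + (r^2 - \<alpha> * \<beta>) * (\<Sum>y\<in>S. A y)"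
    by (simp add: sum.distrib sum_distrib_left sum_distrib_right)
  also have "\<dots> = (r - \<alpha>) * (\<beta> - r) * T" using assms(4,5)
    by (simp add: power2_eq_square algebra_simps)
  finally show ?thesis .
qed

lemma amgm_int:
  fixes a r b :: real
  shows "(r - a) * (b - r) \<le> ((b - a)/2)^2"
proof -
  have "((b - a)/2)^2 - (r - a) * (b - r) = ((r - a) - (b - r))^2/4"
    by (simp add: power2_eq_square field_simps)
  also have "\<dots> \<ge> 0" by simp
  finally show ?thesis by simp
qed

lemma bin_bound:
  fixes k :: nat and N r :: real
  assumes "N > 0" "(real k)^2 / N^2 \<le> r" "r \<le> (real k+1)^2 / N^2"
  shows "(r - (real k)^2/N^2) * ((real k+1)^2/N^2 - r) \<le> 9/4 * r / N^2"
proof (cases "k = 0")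
  case True
  then show ?thesis using assms by (simp add: mult_left_mono field_simps)
next
  case False
  have "(r - (real k)^2/N^2) * ((real k+1)^2/N^2 - r) \<le> (((real k+1)^2/N^2 - (real k)^2/N^2)/2)^2"
    by (rule amgm_int)
  also have "\<dots> = (2*real k+1)^2 / (4 * N^4)" using assms(1)
    by (simp add: power2_eq_square field_simps eval_nat_numeral) 
  also have "\<dots> \<le> 9/4 * ((real k)^2/N^2) / N^2"
  proof -
    have "2*real k+1 \<le> 3 * real k" using False by simp
    then have "(2*real k+1)^2 \<le> (3 * real k)^2" by (intro power_mono) auto
    then have "(2*real k+1)^2 \<le> 9 * (real k)^2" by (simp add: power_mult_distrib)
    then have "(2*real k+1)^2 / (4 * N^4) \<le> 9 * (real k)^2 / (4 * N^4)"
      using assms(1) by (intro divide_right_mono) auto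
    also have "9 * (real k)^2 / (4 * N^4) = 9/4 * ((real k)^2/N^2) / N^2"
      using assms(1) by (simp add: field_simps eval_nat_numeral)
    finally show ?thesis .
  qed
  also have "\<dots> \<le> 9/4 * r / N^2" using assms(2) assms(1)
    by (intro divide_right_mono mult_left_mono) auto
  finally show ?thesis .
qed




lemma wsum_ge:
  fixes A p :: "'y \<Rightarrow> real"
  assumes "\<And>y. y\<in>S \<Longrightarrow> A y \<ge> 0" "\<And>y. y\<in>S \<Longrightarrow> c \<le> p y"
  shows "c * (\<Sum>y\<in>S. A y) \<le> (\<Sum>y\<in>S. A y * p y)"
  unfolding sum_distrib_left
proof (rule sum_mono)
  fix y assume "y \<in> S"
  then show "c * A y \<le> A y * p y" using assms[of y] by (metis mult.commute mult_right_mono)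
qed

lemma wsum_le:
  fixes A p :: "'y \<Rightarrow> real"
  assumes "\<And>y. y\<in>S \<Longrightarrow> A y \<ge> 0" "\<And>y. y\<in>S \<Longrightarrow> p y \<le> c"
  shows "(\<Sum>y\<in>S. A y * p y) \<le> c * (\<Sum>y\<in>S. A y)"
  unfolding sum_distrib_left
proof (rule sum_mono)
  fix y assume "y \<in> S"
  then show "A y * p y \<le> c * A y" using assms[of y] by (metis mult.commute mult_right_mono)
qed

lemma cell:
  fixes A :: "'y \<Rightarrow> real" and p :: "nat \<Rightarrow> 'y \<Rightarrow> real" and N :: real
  assumes fin: "finite S" and ne: "S \<noteq> {}" and Apos: "\<And>y. y\<in>S \<Longrightarrow> A y > 0"
    and pnn: "\<And>x y. x<q \<Longrightarrow> y\<in>S \<Longrightarrow> p x y \<ge> 0"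
    and psum: "\<And>y. y\<in>S \<Longrightarrow> (\<Sum>x<q. p x y) = 1"
    and j: "j<q" and pj: "\<And>y. y\<in>S \<Longrightarrow> p j y \<ge> 1/q"
    and N: "N>0"
    and bins: "\<And>x. x<q \<Longrightarrow> x\<noteq>j \<Longrightarrow> \<exists>k::nat. \<forall>y\<in>S. (real k)^2/N^2 \<le> p x y \<and> p x y \<le> (real k+1)^2/N^2"
  shows "(\<Sum>x<q. (\<Sum>y\<in>S. A y * (p x y)^2 / ((\<Sum>y\<in>S. A y * p x y)/(\<Sum>y\<in>S. A y))) - (\<Sum>y\<in>S. A y * p x y))
         \<le> 9/4*(real q^2-1)/N^2 * (\<Sum>y\<in>S. A y)"
proof -
  define T where "T = (\<Sum>y\<in>S. A y)"
  define r where "r x = (\<Sum>y\<in>S. A y * p x y) / T" for x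
  have Tpos: "T > 0" unfolding T_def using fin ne Apos by (intro sum_pos) auto
  have rT: "(\<Sum>y\<in>S. A y * p x y) = r x * T" for x using Tpos by (simp add: r_def)
  have rnn: "r x \<ge> 0" if "x<q" for x
    unfolding r_def using Tpos Apos pnn that by (intro divide_nonneg_pos sum_nonneg mult_nonneg_nonneg) (auto intro: less_imp_le)
  have rsum: "(\<Sum>x<q. r x) = 1"
  proof -
    have "(\<Sum>x<q. r x) = (\<Sum>x<q. \<Sum>y\<in>S. A y * p x y) / T" by (simp add: r_def sum_divide_distrib)
    also have "(\<Sum>x<q. \<Sum>y\<in>S. A y * p x y) = (\<Sum>y\<in>S. A y * (\<Sum>x<q. p x y))"
      by (subst sum.swap) (simp add: sum_distrib_left)
    also have "\<dots> = T" unfolding T_def using psum by simp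
    finally show ?thesis using Tpos by simp
  qed
  define V where "V x = (\<Sum>y\<in>S. A y * (p x y - r x)^2)" for x
  have G: "(\<Sum>y\<in>S. A y * (p x y)^2 / r x) - (\<Sum>y\<in>S. A y * p x y) = V x / r x" if "x<q" for x
  proof (cases "r x = 0")
    case True
    then have "(\<Sum>y\<in>S. A y * p x y) = 0" using rT by simp
    then have "\<forall>y\<in>S. A y * p x y = 0" using fin Apos pnn that
      by (subst (asm) sum_nonneg_eq_0_iff) (auto intro: mult_nonneg_nonneg less_imp_le)
    then have "\<forall>y\<in>S. p x y = 0" using Apos by (metis less_irrefl mult_eq_0_iff)
    then show ?thesis using True by (simp add: V_def)
  next
    case False
    have "V x = (\<Sum>y\<in>S. A y * (p x y)^2 - 2 * r x * (A y * p x y) + (r x)^2 * A y)"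
      unfolding V_def by (intro sum.cong refl) (simp add: power2_eq_square algebra_simps)
    also have "\<dots> = (\<Sum>y\<in>S. A y * (p x y)^2) - 2 * r x * (r x * T) + (r x)^2 * T"
      by (simp add: sum.distrib sum_subtractf sum_distrib_left[symmetric] rT T_def)
    finally have "V x = (\<Sum>y\<in>S. A y * (p x y)^2) - (r x)^2 * T" by (simp add: power2_eq_square)
    then show ?thesis using False by (simp add: rT sum_divide_distrib[symmetric] field_simps power2_eq_square)
  qed
  have Vnn: "V x \<ge> 0" for x unfolding V_def using Apos by (intro sum_nonneg mult_nonneg_nonneg) (auto intro: less_imp_le)
  have Vb: "V x \<le> 9/4 * r x * T / N^2" if xq: "x<q" and xj: "x\<noteq>j" for x
  proof -
    obtain k :: nat where k: "\<forall>y\<in>S. (real k)^2/N^2 \<le> p x y \<and> p x y \<le> (real k+1)^2/N^2"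
      using bins[OF xq xj] by blast
    have lo: "(real k)^2/N^2 \<le> r x"
    proof -
      have "(real k)^2/N^2 * T \<le> (\<Sum>y\<in>S. A y * p x y)"
        unfolding T_def using k Apos by (intro wsum_ge) (auto intro: less_imp_le)
      then show ?thesis unfolding rT using mult_le_cancel_right_pos[OF Tpos] by blast
    qed
    have hi: "r x \<le> (real k+1)^2/N^2"
    proof -
      have "(\<Sum>y\<in>S. A y * p x y) \<le> (real k+1)^2/N^2 * T"
        unfolding T_def using k Apos by (intro wsum_le) (auto intro: less_imp_le)
      then show ?thesis unfolding rT using mult_le_cancel_right_pos[OF Tpos] by blast
    qed
    have "V x \<le> (r x - (real k)^2/N^2) * ((real k+1)^2/N^2 - r x) * T"
      unfolding V_def using fin Apos k by (intro var_interval[OF fin]) (auto intro: less_imp_le simp: rT T_def)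
    also have "\<dots> \<le> 9/4 * r x / N^2 * T"
      using bin_bound[OF N lo hi] Tpos by (intro mult_right_mono) auto
    finally show ?thesis by simp
  qed
  define K where "K = {..<q} - {j}"
  have finK: "finite K" and cardK: "card K = q - 1" using j by (auto simp: K_def)
  have splitq: "(\<Sum>x<q. f x) = f j + (\<Sum>x\<in>K. f x)" for f :: "nat \<Rightarrow> real"
    unfolding K_def using j by (subst sum.remove[of _ j]) auto
  have sumKV: "(\<Sum>x\<in>K. V x) \<le> 9/4 * T / N^2"
  proof -
    have "(\<Sum>x\<in>K. V x) \<le> (\<Sum>x\<in>K. 9/4 * T / N^2 * r x)"
      using Vb by (intro sum_mono) (auto simp: K_def algebra_simps)
    also have "\<dots> = 9/4 * T / N^2 * (\<Sum>x\<in>K. r x)" by (simp add: sum_distrib_left)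
    also have "(\<Sum>x\<in>K. r x) \<le> 1" using rsum splitq[of r] rnn[OF j] by simp
    then have "9/4 * T / N^2 * (\<Sum>x\<in>K. r x) \<le> 9/4 * T / N^2"
      using Tpos N by (intro mult_left_le) auto
    finally show ?thesis .
  qed
  have Vj: "V j \<le> (real q - 1) * (\<Sum>x\<in>K. V x)"
  proof -
    have pt: "(p j y - r j)^2 \<le> (real q - 1) * (\<Sum>x\<in>K. (p x y - r x)^2)" if "y\<in>S" for y
    proof -
      have "p j y - r j = - (\<Sum>x\<in>K. (p x y - r x))"
        using psum[OF that] rsum splitq[of "\<lambda>x. p x y"] splitq[of r] by (simp add: sum_subtractf)
      then have "(p j y - r j)^2 = (\<Sum>x\<in>K. (p x y - r x))^2" by simp
      also have "\<dots> \<le> real (card K) * (\<Sum>x\<in>K. (p x y - r x)^2)" by (rule sum_sq_card[OF finK])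
      finally show ?thesis using cardK j by (simp add: of_nat_diff)
    qed
    have "V j \<le> (\<Sum>y\<in>S. A y * ((real q - 1) * (\<Sum>x\<in>K. (p x y - r x)^2)))"
      unfolding V_def using pt Apos by (intro sum_mono mult_left_mono) (auto intro: less_imp_le)
    also have "\<dots> = (real q - 1) * (\<Sum>x\<in>K. V x)"
      unfolding V_def by (simp add: sum_distrib_left sum.swap[of _ K] algebra_simps)
    finally show ?thesis .
  qed
  have rj: "r j \<ge> 1/q"
  proof -
    have "1/q * T \<le> (\<Sum>y\<in>S. A y * p j y)"
      unfolding T_def using pj Apos by (intro wsum_ge) (auto intro: less_imp_le)
    then show ?thesis unfolding rT using mult_le_cancel_right_pos[OF Tpos] by blast
  qed
  have q1: "real q \<ge> 1" using j by simp
  have rjpos: "r j > 0" using rj q1 by (smt (verit) divide_pos_pos)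
  have Gj: "V j / r j \<le> real q * V j"
  proof -
    have "V j / r j \<le> V j / (1/q)" using rj q1 Vnn rjpos by (intro divide_left_mono) auto
    then show ?thesis by (simp add: mult.commute)
  qed
  have GK: "V x / r x \<le> 9/4 * T / N^2" if "x\<in>K" for x
  proof (cases "r x = 0")
    case True then show ?thesis using Tpos N by simp
  next
    case False
    then have "r x > 0" using rnn that by (auto simp: K_def order.order_iff_strict)
    then show ?thesis using Vb[of x] that by (auto simp: K_def field_simps)
  qed
  have "(\<Sum>x<q. (\<Sum>y\<in>S. A y * (p x y)^2 / r x) - (\<Sum>y\<in>S. A y * p x y)) = (\<Sum>x<q. V x / r x)"
    using G by (intro sum.cong) auto
  also have "\<dots> = V j / r j + (\<Sum>x\<in>K. V x / r x)" by (rule splitq)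
  also have "\<dots> \<le> real q * ((real q - 1) * (9/4 * T / N^2)) + (real q - 1) * (9/4 * T / N^2)"
  proof (rule add_mono)
    have "V j \<le> (real q - 1) * (9/4 * T / N^2)" using Vj sumKV q1 by (smt (verit) mult_left_mono)
    then show "V j / r j \<le> real q * ((real q - 1) * (9/4 * T / N^2))" using Gj q1
      by (smt (verit) mult_left_mono of_nat_0_le_iff)
    have "(\<Sum>x\<in>K. V x / r x) \<le> (\<Sum>x\<in>K. 9/4 * T / N^2)" using GK by (intro sum_mono)
    then show "(\<Sum>x\<in>K. V x / r x) \<le> (real q - 1) * (9/4 * T / N^2)" using cardK q1 by (simp add: of_nat_diff)
  qed
  also have "\<dots> = 9/4*(real q^2-1)/N^2 * T" using N by (simp add: power2_eq_square field_simps)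
  finally show ?thesis unfolding r_def T_def .
qed




lemma term_bound:
  fixes w P Q PQ q :: real
  assumes "w \<ge> 0" "q > 0" "w > 0 \<Longrightarrow> P > 0 \<and> Q \<ge> w \<and> PQ \<ge> P"
  shows "(1/q) * w * (ln (w / P) - ln (Q / PQ)) \<le> w^2 * PQ / (q * P * Q) - w / q"
proof (cases "w = 0")
  case True then show ?thesis by simp
next
  case False
  then have w: "w > 0" using assms(1) by simp
  with assms(3) have P: "P > 0" and Q: "Q \<ge> w" and PQ: "PQ \<ge> P" by auto
  have Qp: "Q > 0" using Q w by simp
  have PQp: "PQ > 0" using PQ P by simp
  have "ln (w / P) - ln (Q / PQ) = ln (w * PQ / (P * Q))"
    using w P Qp PQp by (simp add: ln_div ln_mult)
  also have "\<dots> \<le> w * PQ / (P * Q) - 1" using w P Qp PQp by (intro ln_le_minus_one) auto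
  finally have "(1/q) * w * (ln (w / P) - ln (Q / PQ)) \<le> (1/q) * w * (w * PQ / (P * Q) - 1)"
    using w assms(2) by (intro mult_left_mono) auto
  also have "\<dots> = w^2 * PQ / (q * P * Q) - w / q" using assms(2) P Qp
    by (simp add: field_simps power2_eq_square)
  finally show ?thesis .
qed

lemma loss_bound:
  fixes W :: "nat \<Rightarrow> 'y \<Rightarrow> real" and \<sigma> :: "'y \<Rightarrow> 'z" and N :: real
  assumes ch: "channel q Y W" and q: "q > 0" and finZ: "finite Z"
    and \<sigma>Z: "\<And>y. y \<in> Y \<Longrightarrow> \<sigma> y \<in> Z" and N: "N > 0"
    and cells: "\<And>z. z \<in> Z \<Longrightarrow> \<exists>j<q.
        (\<forall>y\<in>Y. \<sigma> y = z \<longrightarrow> (\<Sum>x<q. W x y) > 0 \<longrightarrow> W j y \<ge> (\<Sum>x<q. W x y) / q) \<and>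
        (\<forall>x<q. x \<noteq> j \<longrightarrow> (\<exists>k::nat. \<forall>y\<in>Y. \<sigma> y = z \<longrightarrow> (\<Sum>x<q. W x y) > 0 \<longrightarrow>
            (real k)^2/N^2 \<le> W x y / (\<Sum>x<q. W x y) \<and> W x y / (\<Sum>x<q. W x y) \<le> (real k+1)^2/N^2))"
  shows "mutual_info q Y (uniform q) W - mutual_info q Z (uniform q) (\<lambda>x z. \<Sum>y\<in>{y\<in>Y. \<sigma> y = z}. W x y)
           \<le> 9/4*(real q^2-1)/N^2"
proof -
  define s where "s y = (\<Sum>x<q. W x y)" for y
  define Yz where "Yz z = {y\<in>Y. \<sigma> y = z}" for z
  define Q where "Q x z = (\<Sum>y\<in>Yz z. W x y)" for x z
  define P where "P y = out_prob q (uniform q) W y" for y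
  define PQ where "PQ z = out_prob q (uniform q) Q z" for z
  have finY: "finite Y" and Wnn: "\<And>x y. x<q \<Longrightarrow> y\<in>Y \<Longrightarrow> W x y \<ge> 0"
    and Wsum: "\<And>x. x<q \<Longrightarrow> (\<Sum>y\<in>Y. W x y) = 1" using ch by (auto simp: channel_def)
  have finYz: "finite (Yz z)" for z using finY by (simp add: Yz_def)
  have Ps: "P y = s y / q" for y by (simp add: P_def out_prob_def uniform_def s_def sum_divide_distrib)
  have snn: "y \<in> Y \<Longrightarrow> s y \<ge> 0" for y unfolding s_def using Wnn by (intro sum_nonneg) auto
  have s0: "W x y = 0" if "y\<in>Y" "x<q" "s y = 0" for x y
  proof -
    have "\<forall>x\<in>{..<q}. W x y = 0" using that Wnn unfolding s_def
      by (subst sum_nonneg_eq_0_iff[symmetric]) auto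
    then show ?thesis using that by auto
  qed
  have PQs: "PQ z = (\<Sum>y\<in>Yz z. P y)" for z
    by (simp add: PQ_def P_def out_prob_def Q_def sum_distrib_left sum.swap[of _ "Yz z"])
  have Qge: "Q x z \<ge> W x y" if "y \<in> Yz z" "x<q" for x y z
    unfolding Q_def using that finYz Wnn
    by (intro member_le_sum) (auto simp: Yz_def)
  have PQge: "PQ z \<ge> P y" if "y \<in> Yz z" for y z
    unfolding PQs using that finYz Wnn snn
    by (intro member_le_sum) (auto simp: Yz_def Ps intro!: divide_nonneg_nonneg)
  have grp: "(\<Sum>y\<in>Y. f y) = (\<Sum>z\<in>Z. \<Sum>y\<in>Yz z. f y)" for f :: "'y \<Rightarrow> real"
  proof -
    have "\<sigma> ` Y \<subseteq> Z" using \<sigma>Z by auto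
    from sum.group[OF finY finZ this, of f] show ?thesis unfolding Yz_def by simp
  qed
  have IW: "mutual_info q Y (uniform q) W = (\<Sum>z\<in>Z. \<Sum>x<q. \<Sum>y\<in>Yz z. (1/q) * W x y * ln (W x y / P y))"
    unfolding mutual_info_def P_def uniform_def
    by (subst grp) (simp add: sum.swap[of _ Z])
  have IQ: "mutual_info q Z (uniform q) Q = (\<Sum>z\<in>Z. \<Sum>x<q. \<Sum>y\<in>Yz z. (1/q) * W x y * ln (Q x z / PQ z))"
    unfolding mutual_info_def PQ_def uniform_def
    by (subst sum.swap) (simp add: Q_def sum_distrib_left sum_distrib_right)
  define C where "C = 9/4*(real q^2-1)/N^2"
  have cellz: "(\<Sum>x<q. \<Sum>y\<in>Yz z. (1/q) * W x y * (ln (W x y / P y) - ln (Q x z / PQ z))) \<le> C * PQ z"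
    if z: "z \<in> Z" for z
  proof -
    have "(\<Sum>x<q. \<Sum>y\<in>Yz z. (1/q) * W x y * (ln (W x y / P y) - ln (Q x z / PQ z)))
        \<le> (\<Sum>x<q. \<Sum>y\<in>Yz z. (W x y)^2 * PQ z / (q * P y * Q x z) - W x y / q)"
    proof (intro sum_mono term_bound)
      fix x y assume x: "x \<in> {..<q}" and y: "y \<in> Yz z"
      then show "0 \<le> W x y" using Wnn by (auto simp: Yz_def)
      show "0 < real q" using q by simp
      assume w: "0 < W x y"
      have "s y \<ge> W x y" unfolding s_def using x Wnn y by (intro member_le_sum) (auto simp: Yz_def)
      then have "P y > 0" using w q by (simp add: Ps)
      then show "0 < P y \<and> W x y \<le> Q x z \<and> P y \<le> PQ z" using Qge[OF y] PQge[OF y] x by auto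
    qed
    also have "\<dots> = (\<Sum>x<q. \<Sum>y\<in>{y\<in>Yz z. s y > 0}. (W x y)^2 * PQ z / (q * P y * Q x z) - W x y / q)"
    proof (rule sum.cong[OF refl])
      fix x assume x: "x \<in> {..<q}"
      show "(\<Sum>y\<in>Yz z. (W x y)^2 * PQ z / (q * P y * Q x z) - W x y / q) = (\<Sum>y\<in>{y\<in>Yz z. s y > 0}. (W x y)^2 * PQ z / (q * P y * Q x z) - W x y / q)"
        using finYz s0 snn x by (intro sum.mono_neutral_right) (force simp: Yz_def)+
    qed
    also have "\<dots> \<le> C * PQ z"
    proof (cases "{y\<in>Yz z. s y > 0} = {}")
      case True
      have q1: "real q \<ge> 1" using q by simp
      then have "1 \<le> real q * real q" using mult_mono[of 1 "real q" 1 "real q"] by simp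
      then have "C \<ge> 0" unfolding C_def by (intro divide_nonneg_nonneg mult_nonneg_nonneg) (auto simp: power2_eq_square)
      moreover have "PQ z \<ge> 0" unfolding PQs using snn by (intro sum_nonneg) (auto simp: Ps Yz_def)
      ultimately show ?thesis using True by (simp only: sum.empty sum.neutral_const) simp
    next
      case False
      define S where "S = {y\<in>Yz z. s y > 0}"
      obtain j where j: "j<q" and jmax: "\<forall>y\<in>Y. \<sigma> y = z \<longrightarrow> s y > 0 \<longrightarrow> W j y \<ge> s y / q"
        and jbins: "\<forall>x<q. x \<noteq> j \<longrightarrow> (\<exists>k::nat. \<forall>y\<in>Y. \<sigma> y = z \<longrightarrow> s y > 0 \<longrightarrow>
            (real k)^2/N^2 \<le> W x y / s y \<and> W x y / s y \<le> (real k+1)^2/N^2)"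
        using cells[OF z] unfolding s_def by blast
      have finS: "finite S" using finYz by (simp add: S_def)
      have SY: "y \<in> S \<Longrightarrow> y \<in> Y \<and> \<sigma> y = z \<and> s y > 0" for y by (auto simp: S_def Yz_def)
      have cl: "(\<Sum>x<q. (\<Sum>y\<in>S. P y * (W x y / s y)^2 / ((\<Sum>y\<in>S. P y * (W x y / s y))/(\<Sum>y\<in>S. P y))) - (\<Sum>y\<in>S. P y * (W x y / s y)))
         \<le> 9/4*(real q^2-1)/N^2 * (\<Sum>y\<in>S. P y)"
      proof (rule cell[OF finS])
        show "S \<noteq> {}" using False by (simp add: S_def)
        show "0 < P y" if "y \<in> S" for y using SY[OF that] q by (simp add: Ps)
        show "0 \<le> W x y / s y" if "x<q" "y \<in> S" for x y using SY[OF that(2)] Wnn that by simp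
        show "(\<Sum>x<q. W x y / s y) = 1" if "y \<in> S" for y using SY[OF that]
          by (simp add: sum_divide_distrib[symmetric] s_def)
        show "j < q" by (rule j)
        show "1 / real q \<le> W j y / s y" if "y \<in> S" for y using SY[OF that] jmax q
          by (auto simp: field_simps)
        show "0 < N" by (rule N)
        show "\<exists>k. \<forall>y\<in>S. (real k)\<^sup>2 / N\<^sup>2 \<le> W x y / s y \<and> W x y / s y \<le> (real k + 1)\<^sup>2 / N\<^sup>2"
          if "x<q" "x \<noteq> j" for x using jbins that SY by metis
      qed
      have sPQ: "(\<Sum>y\<in>S. P y) = PQ z"
        unfolding PQs S_def using finYz s0 snn
        by (intro sum.mono_neutral_left) (auto simp: Ps Yz_def less_le)
      have sW: "(\<Sum>y\<in>S. W x y) = Q x z" if x: "x<q" for x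
        unfolding S_def Q_def using finYz s0 snn x
        by (intro sum.mono_neutral_left) (auto simp: Yz_def less_le)
      have sQ: "(\<Sum>y\<in>S. P y * (W x y / s y)) = Q x z / q" if x: "x<q" for x
      proof -
        have "(\<Sum>y\<in>S. P y * (W x y / s y)) = (\<Sum>y\<in>S. W x y / q)"
        proof (intro sum.cong refl)
          fix y assume "y \<in> S"
          then have "s y > 0" using SY by blast
          then show "P y * (W x y / s y) = W x y / q" using q by (simp add: Ps)
        qed
        also have "\<dots> = (\<Sum>y\<in>Yz z. W x y / q)"
          unfolding S_def using finYz s0 snn x
          by (intro sum.mono_neutral_left) (auto simp: Yz_def less_le)
        finally show ?thesis by (simp add: Q_def sum_divide_distrib)
      qed
      have eq: "(\<Sum>y\<in>S. (W x y)^2 * PQ z / (q * P y * Q x z) - W x y / q)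
          = (\<Sum>y\<in>S. P y * (W x y / s y)^2 / ((\<Sum>y\<in>S. P y * (W x y / s y))/(\<Sum>y\<in>S. P y))) - (\<Sum>y\<in>S. P y * (W x y / s y))"
        if x: "x<q" for x
        unfolding sQ[OF x] sPQ sum_subtractf
      proof (intro arg_cong2[where f="(-)"])
        show "(\<Sum>y\<in>S. (W x y)\<^sup>2 * PQ z / (real q * P y * Q x z)) =
            (\<Sum>y\<in>S. P y * (W x y / s y)\<^sup>2 / (Q x z / real q / PQ z))"
        proof (intro sum.cong refl)
          fix y assume "y \<in> S"
          then have "s y > 0" using SY by blast
          then show "(W x y)\<^sup>2 * PQ z / (real q * P y * Q x z) = P y * (W x y / s y)\<^sup>2 / (Q x z / real q / PQ z)"
            using q by (simp add: Ps field_simps power2_eq_square)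
        qed
        show "(\<Sum>y\<in>S. W x y / real q) = Q x z / real q"
          using sW[OF x] by (simp add: sum_divide_distrib[symmetric])
      qed
      have "(\<Sum>x<q. \<Sum>y\<in>S. (W x y)^2 * PQ z / (q * P y * Q x z) - W x y / q)
          = (\<Sum>x<q. (\<Sum>y\<in>S. P y * (W x y / s y)^2 / ((\<Sum>y\<in>S. P y * (W x y / s y))/(\<Sum>y\<in>S. P y))) - (\<Sum>y\<in>S. P y * (W x y / s y)))"
        using eq by (intro sum.cong) auto
      also have "\<dots> \<le> C * PQ z" using cl sPQ by (simp add: C_def)
      finally show ?thesis by (simp add: S_def)
    qed
    finally show ?thesis .
  qed
  have "mutual_info q Y (uniform q) W - mutual_info q Z (uniform q) Q
      = (\<Sum>z\<in>Z. \<Sum>x<q. \<Sum>y\<in>Yz z. (1/q) * W x y * (ln (W x y / P y) - ln (Q x z / PQ z)))"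
    unfolding IW IQ by (simp add: sum_subtractf right_diff_distrib)
  also have "\<dots> \<le> (\<Sum>z\<in>Z. C * PQ z)" using cellz by (intro sum_mono)
  also have "(\<Sum>z\<in>Z. PQ z) = 1"
  proof -
    have "(\<Sum>z\<in>Z. PQ z) = (\<Sum>y\<in>Y. P y)" unfolding PQs by (rule grp[symmetric])
    also have "\<dots> = (\<Sum>x<q. \<Sum>y\<in>Y. W x y) / q" by (simp add: Ps s_def sum_divide_distrib[symmetric] sum.swap[of _ Y])
    also have "\<dots> = 1" using Wsum q by simp
    finally show ?thesis .
  qed
  then have "(\<Sum>z\<in>Z. C * PQ z) = C" by (simp add: sum_distrib_left[symmetric])
  finally show ?thesis unfolding Q_def Yz_def C_def .
qed




lemma Gamma_half_bound:
  fixes m :: nat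
  shows "Gamma (1 + real m / 2) ^ 2 \<le> fact m"
proof -
  have cv: "convex_on {0<..} (ln \<circ> Gamma :: real \<Rightarrow> real)" by (rule log_convex_Gamma_real)
  have "(ln \<circ> Gamma) ((1 - 1/2) *\<^sub>R 1 + (1/2) *\<^sub>R (1 + real m)) \<le> (1 - 1/2) * (ln \<circ> Gamma) 1 + (1/2) * (ln \<circ> Gamma) (1 + real m)"
    by (rule convex_onD[OF cv]) auto
  moreover have "(1 - 1/2) *\<^sub>R 1 + (1/2) *\<^sub>R (1 + real m) = 1 + real m / 2" by (simp add: field_simps)
  moreover have "Gamma (1 + real m) = fact m" using Gamma_fact[of m, where 'a=real] by simp
  ultimately have h: "ln (Gamma (1 + real m / 2)) \<le> ln (fact m) / 2" by simp
  have gp: "Gamma (1 + real m / 2) > 0" by (intro Gamma_real_pos) (simp add: add_pos_nonneg)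
  have "ln (Gamma (1 + real m / 2) ^ 2) = 2 * ln (Gamma (1 + real m / 2))" using gp by (simp add: power2_eq_square ln_mult)
  also have "\<dots> \<le> ln (fact m)" using h by simp
  finally have "ln (Gamma (1 + real m / 2) ^ 2) \<le> ln (fact m)" .
  moreover have "Gamma (1 + real m / 2) ^ 2 > 0" using gp by (intro zero_less_power)
  moreover have "(fact m :: real) > 0" by simp
  ultimately show ?thesis using ln_le_cancel_iff[of "Gamma (1 + real m / 2) ^ 2" "fact m"] by blast
qed

lemma nu_bound:
  fixes q :: nat
  assumes q: "q \<ge> 2"
  shows "9 * (real q^2 - 1) * real q powr (2 / (real q - 1)) \<le> nu q"
proof -
  define n where "n = real q"
  define a where "a = n - 1"
  have n2: "n \<ge> 2" using q by (simp add: n_def)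
  have a1: "a \<ge> 1" using n2 by (simp add: a_def)
  have aq: "a = real (q - 1)" using q by (simp add: a_def n_def of_nat_diff)
  define s where "s = sqrt (1 + 1 / (2 * a))"
  have s1: "s - 1 > 0" unfolding s_def using a1 by simp
  have s2: "s - 1 \<le> 1 / (4 * a)"
  proof -
    have "s \<le> sqrt ((1 + 1/(4*a))^2)" unfolding s_def using a1
      by (intro real_sqrt_le_mono) (simp add: power2_eq_square field_simps)
    also have "\<dots> = 1 + 1/(4*a)" using a1 by simp
    finally show ?thesis by simp
  qed
  have sq: "(s - 1)^2 \<le> 1 / (16 * a^2)"
  proof -
    have "(s - 1)^2 \<le> (1 / (4 * a))^2" using s1 s2 by (intro power_mono) auto
    also have "\<dots> = 1 / (16 * a^2)" by (simp add: power2_eq_square)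
    finally show ?thesis .
  qed
  have F1: "pi * n * a / (2 * (s - 1)^2) \<ge> 8 * pi * n * a^3"
  proof -
    have "pi * n * a / (2 * (s - 1)^2) \<ge> pi * n * a / (2 * (1 / (16 * a^2)))"
      using s1 sq a1 n2 by (intro divide_left_mono mult_pos_pos) auto
    moreover have "pi * n * a / (2 * (1 / (16 * a^2))) = 8 * pi * n * a^3" using a1
      by (simp add: field_simps power2_eq_square power3_eq_cube)
    ultimately show ?thesis by linarith
  qed
  define g where "g = Gamma (1 + a / 2)"
  have gp: "g > 0" unfolding g_def using a1 by (intro Gamma_real_pos) simp
  have g2: "g^2 \<le> a powr a"
  proof -
    have "g^2 \<le> fact (q - 1)" unfolding g_def aq by (rule Gamma_half_bound)
    also have "\<dots> \<le> real ((q-1)^(q-1))" by (rule fact_le_power)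
    also have "\<dots> = real (q-1) ^ (q-1)" by simp
    also have "\<dots> = real (q-1) powr real (q-1)" using q by (intro powr_realpow[symmetric]) simp
    also have "\<dots> = a powr a" by (simp add: aq)
    finally show ?thesis .
  qed
  have gpow: "g powr (2 / a) \<le> a"
  proof -
    have "g powr (2 / a) = (g powr 2) powr (1 / a)" by (simp add: powr_powr)
    also have "g powr 2 = g^2" using gp by (simp add: powr_numeral)
    finally have "g powr (2 / a) = (g^2) powr (1 / a)" .
    also have "\<dots> \<le> (a powr a) powr (1 / a)" using g2 gp a1 by (intro powr_mono2) auto
    also have "\<dots> = a powr (a * (1/a))" by (rule powr_powr)
    also have "\<dots> = a" using a1 by simp
    finally show ?thesis .
  qed
  have F2: "(2 * n / g) powr (2 / a) \<ge> n powr (2 / a) / a"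
  proof -
    have "(2 * n / g) powr (2 / a) = (2 * n) powr (2 / a) / g powr (2 / a)"
      using gp n2 by (simp add: powr_divide)
    also have "\<dots> \<ge> n powr (2 / a) / a"
    proof (rule frac_le)
      show "0 \<le> (2 * n) powr (2 / a)" by simp
      show "n powr (2 / a) \<le> (2 * n) powr (2 / a)" using n2 a1 by (intro powr_mono2) auto
      show "0 < g powr (2 / a)" using gp by simp
      show "g powr (2 / a) \<le> a" by (rule gpow)
    qed
    finally show ?thesis .
  qed
  have "nu q = (pi * n * a / (2 * (s - 1)^2)) * (2 * n / g) powr (2 / a)"
    by (simp add: nu_def n_def a_def s_def g_def)
  also have "\<dots> \<ge> (8 * pi * n * a^3) * (n powr (2 / a) / a)"
    using F1 F2 a1 n2 by (intro mult_mono) auto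
  finally have nu1: "nu q \<ge> 8 * pi * n * a^2 * n powr (2 / a)" using a1
    by (simp add: power2_eq_square power3_eq_cube field_simps)
  have "9 * (n^2 - 1) \<le> 8 * pi * n * a^2"
  proof -
    have "9 * (n^2 - 1) = 9 * (n + 1) * a" by (simp add: a_def power2_eq_square algebra_simps)
    also have "\<dots> \<le> (8 * pi * n * a) * a"
    proof (intro mult_right_mono)
      have "pi * a \<ge> 3 * 1" using pi_gt3 a1 by (intro mult_mono) auto
      then have "8 * n * (pi * a) \<ge> 8 * n * 3" using n2 by (intro mult_left_mono) auto
      moreover have "8 * pi * n * a = 8 * n * (pi * a)" by (simp add: algebra_simps)
      ultimately have h1: "24 * n \<le> 8 * pi * n * a" by simp
      have "9 * (n + 1) \<le> 24 * n" using n2 by simp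
      then show "9 * (n + 1) \<le> 8 * pi * n * a" using h1 by (rule order.trans)
    qed (use a1 in auto)
    finally show ?thesis by (simp add: power2_eq_square mult.assoc)
  qed
  then have "9 * (n^2 - 1) * n powr (2 / a) \<le> 8 * pi * n * a^2 * n powr (2 / a)"
    by (intro mult_right_mono) auto
  with nu1 show ?thesis by (simp add: n_def a_def)
qed




lemma N_choice:
  fixes q L :: nat
  assumes q: "q \<ge> 1" and L: "L \<ge> 2*q"
  shows "\<exists>N::nat. N \<ge> 1 \<and> q * N^(q-1) \<le> L \<and>
           9/4*(real q^2-1)/(real N)^2 \<le> nu q * real L powr (- 2 / (real q - 1))"
proof (cases "q = 1")
  case True
  have "nu 1 = 0" by (simp add: nu_def)
  then show ?thesis using True L by (intro exI[of _ 1]) simp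
next
  case False
  then have q2: "q \<ge> 2" using q by simp
  define e where "e = 2 / (real q - 1)"
  define t where "t = (real L / real q) powr (1 / (real q - 1))"
  have e0: "e > 0" using q2 by (simp add: e_def)
  have Lq: "real L / real q \<ge> 2" using L q by (simp add: field_simps)
  have t1: "t \<ge> 1" unfolding t_def using Lq q2 L by (intro ge_one_powr_ge_zero) (auto simp: of_nat_diff)
  define N where "N = nat \<lfloor>t\<rfloor>"
  have f1: "1 \<le> \<lfloor>t\<rfloor>" using t1 by (simp add: le_floor_iff)
  have N1: "N \<ge> 1" using nat_mono[OF f1] unfolding N_def by simp
  have NN: "real N = of_int \<lfloor>t\<rfloor>" using f1 by (simp add: N_def)
  have Nt: "real N \<le> t" unfolding NN by (rule of_int_floor_le)
  have Nt2: "t < real N + 1" unfolding NN by (rule real_of_int_floor_add_one_gt)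
  have tpow: "t ^ (q-1) = real L / real q"
  proof -
    have "t ^ (q-1) = t powr real (q-1)" using t1 by (simp add: powr_realpow)
    also have "\<dots> = (real L/real q) powr (1 / (real q - 1) * real (q-1))" by (simp add: t_def powr_powr)
    also have "1 / (real q - 1) * real (q-1) = 1" using q2 by (simp add: of_nat_diff)
    finally show ?thesis using Lq by simp
  qed
  have "real N ^ (q-1) \<le> t ^ (q-1)" using Nt by (intro power_mono) auto
  then have "real q * real N^(q-1) \<le> real q * t^(q-1)" by (intro mult_left_mono) auto
  also have "real q * t^(q-1) = real L" using tpow q by (simp add: field_simps)
  finally have "real q * real N^(q-1) \<le> real L" .
  then have c1: "q * N^(q-1) \<le> L" by (metis of_nat_le_iff of_nat_mult of_nat_power)
  have t2: "t \<le> 2 * real N" using Nt2 N1 by linarith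
  have tsq: "t^2 = (real L / real q) powr e"
  proof -
    have "t^2 = t powr 2" using t1 by (simp add: powr_numeral)
    also have "\<dots> = (real L / real q) powr e" by (simp add: t_def powr_powr e_def)
    finally show ?thesis .
  qed
  have "1 / (real N)^2 \<le> 4 / t^2"
  proof -
    have "t^2 \<le> (2 * real N)^2" using t2 t1 by (intro power_mono) auto
    then have "t^2 \<le> 4 * (real N)^2" by (simp add: power_mult_distrib)
    then show ?thesis using t1 N1 by (simp add: field_simps)
  qed
  also have "4 / t^2 = 4 * real q powr e * real L powr (- e)"
    using q2 L by (simp add: tsq powr_divide powr_minus field_simps)
  finally have Nb: "1 / (real N)^2 \<le> 4 * real q powr e * real L powr (- e)" .
  have "1 \<le> real q * real q" using q2 mult_mono[of 1 "real q" 1 "real q"] by simp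
  then have qq: "real q^2 - 1 \<ge> 0" by (simp add: power2_eq_square)
  have "9/4*(real q^2-1)/(real N)^2 = 9/4*(real q^2-1) * (1 / (real N)^2)" by simp
  also have "\<dots> \<le> 9/4*(real q^2-1) * (4 * real q powr e * real L powr (- e))"
    using Nb qq by (intro mult_left_mono) auto
  also have "\<dots> = (9 * (real q^2 - 1) * real q powr e) * real L powr (- e)" by simp
  also have "\<dots> \<le> nu q * real L powr (- e)"
    using nu_bound[OF q2] by (intro mult_right_mono) (auto simp: e_def)
  also have "- e = - 2 / (real q - 1)" by (simp add: e_def)
  finally show ?thesis using N1 c1 by blast
qed




lemma int_mod_expand:
  fixes a q :: nat
  shows "int (a mod q) = int a - int q * int (a div q)"
proof -
  have "a = a div q * q + a mod q" by simp
  then have "int a = int (a div q) * int q + int (a mod q)" by (metis of_nat_add of_nat_mult)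
  then show ?thesis by (simp add: algebra_simps)
qed

lemma nat_mod_eqI:
  fixes a b q :: nat and k :: int
  assumes "int a = int b + int q * k"
  shows "a mod q = b mod q"
proof -
  have "int a mod int q = int b mod int q" using assms by simp
  then show ?thesis by (metis of_nat_eq_iff zmod_int)
qed

lemma M1:
  fixes x q t :: nat
  assumes "x < q" "t < q"
  shows "((x + (q - t)) mod q + t) mod q = x"
proof -
  have "((x + (q - t)) mod q + t) mod q = (x + (q - t) + t) mod q" by (simp add: mod_add_left_eq)
  also have "x + (q - t) + t = x + q" using assms by simp
  finally show ?thesis using assms by simp
qed

lemma M2:
  fixes j q t :: nat
  assumes "j < q" "t < q"
  shows "((j + t) mod q + (q - t)) mod q = j"
proof -
  have "((j + t) mod q + (q - t)) mod q = (j + t + (q - t)) mod q" by (simp add: mod_add_left_eq)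
  also have "j + t + (q - t) = j + q" using assms by simp
  finally show ?thesis using assms by simp
qed

lemma M3:
  fixes x q t j :: nat
  assumes "x < q" "t < q" "j < q"
  shows "(x + (q - t)) mod q = (j + (x + (q - (j + t) mod q)) mod q) mod q"
proof (rule nat_mod_eqI)
  define r where "r = (j + t) mod q"
  have rq: "r \<le> q" using assms unfolding r_def by (simp add: less_imp_le)
  have h1: "int r = int (j + t) - int q * int ((j+t) div q)" unfolding r_def by (rule int_mod_expand)
  have h2: "int ((x + (q - r)) mod q) = int (x + (q - r)) - int q * int ((x + (q - r)) div q)" by (rule int_mod_expand)
  have h3: "int (x + (q - r)) = int x + int q - int r" using rq by (simp add: of_nat_diff)
  have h4: "int (x + (q - t)) = int x + int q - int t" using assms by (simp add: of_nat_diff)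
  show "int (x + (q - t)) = int (j + (x + (q - (j + t) mod q)) mod q) + int q * (int ((x + (q - r)) div q) - int ((j+t) div q))"
    unfolding r_def[symmetric] using h1 h2 h3 h4 by (simp add: right_diff_distrib)
qed

lemma M4:
  fixes x q \<theta> :: nat
  assumes a: "x < q" "\<theta> < q" "x \<noteq> \<theta>"
  shows "(x + (q - \<theta>)) mod q \<in> {1..<q}"
proof -
  have "(x + (q - \<theta>)) mod q \<noteq> 0"
  proof
    assume "(x + (q - \<theta>)) mod q = 0"
    then have "((x + (q - \<theta>)) mod q + \<theta>) mod q = \<theta>" using a by simp
    then show False using M1[of x q \<theta>] a by simp
  qed
  then show ?thesis using a by auto
qed

lemma M5:
  fixes x q \<theta> j :: nat
  assumes "x < q" "\<theta> < q" "j < q"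
  shows "(x + (q - (\<theta> + (q - j)) mod q)) mod q = (x + (q - \<theta>) + j) mod q"
proof (rule nat_mod_eqI)
  define r where "r = (\<theta> + (q - j)) mod q"
  have rq: "r \<le> q" using assms unfolding r_def by (simp add: less_imp_le)
  have h1: "int r = int (\<theta> + (q - j)) - int q * int ((\<theta> + (q - j)) div q)" unfolding r_def by (rule int_mod_expand)
  have h3: "int (x + (q - r)) = int x + int q - int r" using rq by (simp add: of_nat_diff)
  have h4: "int (\<theta> + (q - j)) = int \<theta> + int q - int j" using assms by (simp add: of_nat_diff)
  have h5: "int (x + (q - \<theta>) + j) = int x + int q - int \<theta> + int j" using assms by (simp add: of_nat_diff)
  show "int (x + (q - (\<theta> + (q - j)) mod q)) = int (x + (q - \<theta>) + j) + int q * (int ((\<theta> + (q - j)) div q) - 1)"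
    unfolding r_def[symmetric] using h1 h3 h4 h5 by (simp add: right_diff_distrib)
qed

lemma M6:
  fixes x q \<theta> j :: nat
  assumes "x < q" "\<theta> < q" "j < q"
  shows "((x + \<theta>) mod q + (q - \<theta>) + j) mod q = (x + (q - 0) + j) mod q"
proof (rule nat_mod_eqI)
  have h1: "int ((x + \<theta>) mod q) = int (x + \<theta>) - int q * int ((x + \<theta>) div q)" by (rule int_mod_expand)
  have h4: "int ((x + \<theta>) mod q + (q - \<theta>) + j) = int ((x + \<theta>) mod q) + int q - int \<theta> + int j" using assms by (simp add: of_nat_diff)
  show "int ((x + \<theta>) mod q + (q - \<theta>) + j) = int (x + (q - 0) + j) + int q * (- int ((x + \<theta>) div q))"
    using h1 h4 by simp
qed




lemma div_mod_unique:
  fixes a b c d q :: nat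
  assumes "b < q" "d < q" "a * q + b = c * q + d"
  shows "a = c \<and> b = d"
proof -
  have "(a * q + b) mod q = (c * q + d) mod q" using assms(3) by simp
  then have bd: "b = d" using assms(1,2) by simp
  then have "a * q = c * q" using assms(3) by simp
  then show ?thesis using bd assms(1) by simp
qed

lemma rot_bij:
  fixes q t :: nat
  assumes "t < q"
  shows "bij_betw (\<lambda>x. (x + t) mod q) {..<q} {..<q}"
proof -
  have inj: "inj_on (\<lambda>x. (x + t) mod q) {..<q}"
  proof (rule inj_onI)
    fix x y assume x: "x \<in> {..<q}" and y: "y \<in> {..<q}" and e: "(x + t) mod q = (y + t) mod q"
    have "x = ((x + t) mod q + (q - t)) mod q" using M2[of x q t] x assms by simp
    also have "\<dots> = ((y + t) mod q + (q - t)) mod q" using e by simp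
    also have "\<dots> = y" using M2[of y q t] y assms by simp
    finally show "x = y" .
  qed
  moreover have "(\<lambda>x. (x + t) mod q) ` {..<q} \<subseteq> {..<q}" using assms by auto
  ultimately have "(\<lambda>x. (x + t) mod q) ` {..<q} = {..<q}" by (intro endo_inj_surj) auto
  with inj show ?thesis by (simp add: bij_betw_def)
qed

lemma inner_delta:
  fixes h :: "nat \<Rightarrow> real" and j \<theta> q :: nat
  assumes "j < q" "\<theta> < q"
  shows "(\<Sum>t<q. if (j + t) mod q = \<theta> then h t else 0) = h ((\<theta> + (q - j)) mod q)"
proof -
  define t0 where "t0 = (\<theta> + (q - j)) mod q"
  have t0q: "t0 < q" using assms by (simp add: t0_def)
  have iff: "(j + t) mod q = \<theta> \<longleftrightarrow> t = t0" if "t < q" for t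
  proof
    assume e: "(j + t) mod q = \<theta>"
    have "t = ((t + j) mod q + (q - j)) mod q" using M2[of t q j] that assms by simp
    also have "\<dots> = t0" using e by (simp add: t0_def add.commute)
    finally show "t = t0" .
  next
    assume "t = t0"
    then show "(j + t) mod q = \<theta>" using M1[of \<theta> q j] assms by (simp add: t0_def add.commute)
  qed
  have "(\<Sum>t<q. if (j + t) mod q = \<theta> then h t else 0) = (\<Sum>t<q. if t = t0 then h t else 0)"
    using iff by (intro sum.cong) auto
  also have "\<dots> = h t0" using t0q by simp
  finally show ?thesis by (simp add: t0_def)
qed

lemma bin_floor:
  fixes N p :: real
  assumes "N > 0" "p \<ge> 0"
  shows "(real (nat \<lfloor>N * sqrt p\<rfloor>))^2 / N^2 \<le> p \<and> p \<le> (real (nat \<lfloor>N * sqrt p\<rfloor>) + 1)^2 / N^2"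
proof -
  define v where "v = N * sqrt p"
  have v0: "v \<ge> 0" using assms by (simp add: v_def)
  have kv: "real (nat \<lfloor>v\<rfloor>) = of_int \<lfloor>v\<rfloor>" using v0 by simp
  have lo: "real (nat \<lfloor>v\<rfloor>) \<le> v" unfolding kv by (rule of_int_floor_le)
  have hi: "v \<le> real (nat \<lfloor>v\<rfloor>) + 1" unfolding kv using real_of_int_floor_add_one_gt[of v] by linarith
  have vsq: "v^2 = N^2 * p" using assms by (simp add: v_def power_mult_distrib)
  have "(real (nat \<lfloor>v\<rfloor>))^2 \<le> v^2" using lo by (intro power_mono) auto
  then have 1: "(real (nat \<lfloor>v\<rfloor>))^2 / N^2 \<le> p" using assms vsq by (simp add: field_simps)
  have "v^2 \<le> (real (nat \<lfloor>v\<rfloor>) + 1)^2" using hi v0 by (intro power_mono) auto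
  then have 2: "p \<le> (real (nat \<lfloor>v\<rfloor>) + 1)^2 / N^2" using assms vsq by (simp add: field_simps)
  show ?thesis using 1 2 by (simp add: v_def)
qed

lemma shift_ne:
  fixes j d q :: nat
  assumes "j < q" "d \<in> {1..<q}"
  shows "(j + d) mod q \<noteq> j"
proof
  assume "(j + d) mod q = j"
  then have "(j + d) mod q = j mod q" using assms by simp
  then have "q dvd (j + d) - j" by (subst mod_eq_dvd_iff_nat[symmetric]) auto
  then have "q dvd d" by simp
  then show False using assms by (auto dest: dvd_imp_le)
qed




theorem theorem8:
  fixes q :: nat and Y :: "'y set" and W :: "nat \<Rightarrow> 'y \<Rightarrow> real" and L :: nat
  assumes "channel q Y W"
    and "cyclo_symmetric q Y W"
    and "card Y > 2 * q"
    and "L \<ge> 2 * q"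
    and "q dvd L"
  shows "\<exists>(Z :: nat set) (Q :: nat \<Rightarrow> nat \<Rightarrow> real).
           channel q Z Q \<and> degraded q Y W Z Q \<and> card Z \<le> L \<and> cyclo_symmetric q Z Q \<and>
           mutual_info q Y (uniform q) W - mutual_info q Z (uniform q) Q
             \<le> nu q * real L powr (- 2 / (real q - 1))"
proof -
  have finY: "finite Y" and Wnn: "\<And>x y. x<q \<Longrightarrow> y\<in>Y \<Longrightarrow> W x y \<ge> 0"
    and Wsum: "\<And>x. x<q \<Longrightarrow> (\<Sum>y\<in>Y. W x y) = 1" using assms(1) by (auto simp: channel_def)
  have qdvd: "q dvd card Y" using assms(2) unfolding cyclo_symmetric_def by blast
  obtain m :: nat and f :: "nat \<Rightarrow> nat \<Rightarrow> 'y" where bij: "bij_betw (\<lambda>(i, t). f i t) ({..<m} \<times> {..<q}) Y"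
    and cycall: "\<forall>i<m. \<forall>x<q. \<forall>\<theta><q. W x (f i 0) = W ((x + \<theta>) mod q) (f i \<theta>)"
    using assms(2) unfolding cyclo_symmetric_def by blast
  have cyc: "W x (f i 0) = W ((x + \<theta>) mod q) (f i \<theta>)" if "i<m" "x<q" "\<theta><q" for i x \<theta>
    using cycall that by blast
  have q0: "q > 0"
  proof (rule ccontr)
    assume "\<not> q > 0"
    then have "q = 0" by simp
    then show False using qdvd assms(3) by simp
  qed
  obtain N :: nat where N1: "N \<ge> 1" and NL: "q * N^(q-1) \<le> L"
    and Nb: "9/4*(real q^2-1)/(real N)^2 \<le> nu q * real L powr (- 2 / (real q - 1))"
    using N_choice[of q L] assms(4) q0 by auto
  have Npos: "real N > 0" using N1 by simp
  define I where "I = {..<m} \<times> {..<q}"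
  define F where "F = (\<lambda>(i::nat, t::nat). f i t)"
  have bijF: "bij_betw F I Y" using bij by (simp add: F_def I_def)
  have rot: "W x (f i t) = W ((x + (q - t)) mod q) (f i 0)" if "i<m" "x<q" "t<q" for i x t
    using cyc[of i "(x + (q - t)) mod q" t] M1[of x q t] that q0 by simp
  define s0 where "s0 i = (\<Sum>x<q. W x (f i 0))" for i
  have ssum: "(\<Sum>x<q. W x (f i t)) = s0 i" if "i<m" "t<q" for i t
  proof -
    have "s0 i = (\<Sum>x<q. W ((x + t) mod q) (f i t))" unfolding s0_def using cyc that by (intro sum.cong) auto
    also have "\<dots> = (\<Sum>x<q. W x (f i t))" by (rule sum.reindex_bij_betw[OF rot_bij[OF that(2)]])
    finally show ?thesis by simp
  qed
  have fY: "f i t \<in> Y" if "i<m" "t<q" for i t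
    using bij_betwE[OF bijF] that by (auto simp: F_def I_def)
  have jex: "\<exists>j<q. \<forall>x<q. W x (f i 0) \<le> W j (f i 0)" for i
  proof -
    define S where "S = (\<lambda>x. W x (f i 0)) ` {..<q}"
    have "finite S" "S \<noteq> {}" using q0 by (auto simp: S_def)
    then have "Max S \<in> S" by (rule Max_in)
    then obtain j where j: "j<q" "W j (f i 0) = Max S" by (auto simp: S_def)
    have "\<forall>x<q. W x (f i 0) \<le> Max S" using \<open>finite S\<close> by (auto simp: S_def)
    then show ?thesis using j by metis
  qed
  define jj where "jj i = (SOME j. j<q \<and> (\<forall>x<q. W x (f i 0) \<le> W j (f i 0)))" for i
  have jj: "jj i < q \<and> (\<forall>x<q. W x (f i 0) \<le> W (jj i) (f i 0))" for i
    unfolding jj_def by (rule someI_ex) (use jex in blast)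
  define post where "post i x = W x (f i 0) / s0 i" for i x
  have post_nn: "post i x \<ge> 0" if "i<m" "x<q" for i x
    unfolding post_def s0_def using Wnn fY that q0 by (intro divide_nonneg_nonneg sum_nonneg) auto
  define bv where "bv i = (\<lambda>d\<in>{1..<q}. nat \<lfloor>real N * sqrt (post i ((jj i + d) mod q))\<rfloor>)" for i
  define B where "B = PiE {1..<q} (\<lambda>_. {..<N})"
  have finB: "finite B" unfolding B_def by (intro finite_PiE) auto
  have cardB: "card B = N^(q-1)" unfolding B_def by (simp add: card_PiE)
  have bvB: "bv i \<in> B" if i: "i<m" for i
  proof -
    have "nat \<lfloor>real N * sqrt (post i ((jj i + d) mod q))\<rfloor> < N" if d: "d \<in> {1..<q}" for d
    proof -
      define x where "x = (jj i + d) mod q"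
      have xq: "x < q" using q0 by (simp add: x_def)
      have xj: "x \<noteq> jj i" unfolding x_def using shift_ne[of "jj i" q d] jj d by auto
      have ph: "post i x \<le> 1/2"
      proof (cases "s0 i = 0")
        case True then show ?thesis by (simp add: post_def)
      next
        case False
        have "W x (f i 0) + W (jj i) (f i 0) = (\<Sum>y\<in>{x, jj i}. W y (f i 0))" using xj by simp
        also have "\<dots> \<le> s0 i" unfolding s0_def using xq jj Wnn fY i q0
          by (intro sum_mono2) auto
        finally have "2 * W x (f i 0) \<le> s0 i" using jj xq by (smt (verit))
        moreover have "s0 i > 0" using False unfolding s0_def using Wnn fY i q0
          by (metis less_eq_real_def lessThan_iff sum_nonneg)
        ultimately show ?thesis by (simp add: post_def field_simps)
      qed
      have "sqrt (post i x) \<le> sqrt (1/2)" using ph by simp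
      also have "sqrt (1/2) < (1::real)" by (simp add: real_sqrt_less_iff)
      finally have "real N * sqrt (post i x) < real N" using Npos by simp
      then have "\<lfloor>real N * sqrt (post i x)\<rfloor> < int N" by (simp add: floor_less_iff)
      moreover have "0 \<le> \<lfloor>real N * sqrt (post i x)\<rfloor>" using post_nn[OF i xq] by simp
      ultimately have "nat \<lfloor>real N * sqrt (post i x)\<rfloor> < N" by (simp add: nat_less_iff)
      then show ?thesis by (simp add: x_def)
    qed
    then show ?thesis unfolding B_def bv_def by (auto simp: PiE_iff)
  qed
  obtain enc where enc: "bij_betw enc B {0..<card B}" using ex_bij_betw_finite_nat[OF finB] by blast
  define Mc where "Mc = card B"
  define \<sigma>' where "\<sigma>' = (\<lambda>(i::nat, t::nat). enc (bv i) * q + (jj i + t) mod q)"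
  define g where "g = inv_into I F"
  define \<sigma> where "\<sigma> y = \<sigma>' (g y)" for y
  have injF: "inj_on F I" using bijF by (simp add: bij_betw_def)
  have gF: "g (F p) = p" if "p \<in> I" for p using injF that by (simp add: g_def)
  have Fg: "g y \<in> I \<and> F (g y) = y" if "y \<in> Y" for y
    using bijF that unfolding g_def bij_betw_def by (auto intro: inv_into_into f_inv_into_f)
  have \<sigma>F: "\<sigma> (f i t) = enc (bv i) * q + (jj i + t) mod q" if "i<m" "t<q" for i t
    using gF[of "(i,t)"] that by (simp add: \<sigma>_def \<sigma>'_def F_def I_def)
  have encB: "enc b < Mc" if "b \<in> B" for b using enc that by (auto simp: Mc_def bij_betw_def)
  define Z where "Z = {..<Mc*q}"
  define Q where "Q x z = (\<Sum>y\<in>{y\<in>Y. \<sigma> y = z}. W x y)" for x z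
  have lt: "a * q + b < Mc * q" if "a < Mc" "b < q" for a b
  proof -
    have "a * q + b < a * q + q" using that by simp
    also have "\<dots> = (a + 1) * q" by simp
    also have "\<dots> \<le> Mc * q" using that by (intro mult_right_mono) auto
    finally show ?thesis .
  qed
  have \<sigma>Z: "\<sigma> y \<in> Z" if "y \<in> Y" for y
  proof -
    obtain i t where it: "g y = (i, t)" by (cases "g y")
    with Fg[OF that] have i: "i<m" "t<q" and y: "f i t = y" by (auto simp: I_def F_def)
    show ?thesis using \<sigma>F[OF i] y lt[OF encB[OF bvB[OF i(1)]]] q0 by (simp add: Z_def)
  qed
  have finZ: "finite Z" by (simp add: Z_def)
  have \<sigma>YZ: "\<sigma> ` Y \<subseteq> Z" using \<sigma>Z by auto
  have Qnn: "Q x z \<ge> 0" if "x<q" for x z unfolding Q_def using Wnn that by (intro sum_nonneg) auto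
  have chZ: "channel q Z Q"
    unfolding channel_def
  proof (intro conjI finZ allI impI ballI)
    fix x assume x: "x<q"
    show "(\<Sum>z\<in>Z. Q x z) = 1"
      unfolding Q_def using sum.group[OF finY finZ \<sigma>YZ, of "W x"] Wsum[OF x] by simp
    fix z show "0 \<le> Q x z" using Qnn x by simp
  qed
  have degr: "degraded q Y W Z Q"
    unfolding degraded_def
  proof (intro exI[of _ "\<lambda>y z. if \<sigma> y = z then 1 else 0"] conjI ballI allI impI)
    fix y assume y: "y \<in> Y"
    show "(\<Sum>z\<in>Z. if \<sigma> y = z then 1 else 0) = (1::real)" using \<sigma>Z[OF y] finZ by simp
    fix z show "0 \<le> (if \<sigma> y = z then 1 else 0 :: real)" by simp
  next
    fix x z assume "x<q" "z \<in> Z"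
    show "Q x z = (\<Sum>y\<in>Y. W x y * (if \<sigma> y = z then 1 else 0))"
      unfolding Q_def using finY by (simp add: sum.inter_filter if_distrib cong: if_cong)
  qed
  have cardZ: "card Z \<le> L" using NL by (simp add: Z_def Mc_def cardB mult.commute)
  have Qblock: "Q x (c*q + \<theta>) = (\<Sum>i<m. if enc (bv i) = c then W ((x + (q - \<theta>) + jj i) mod q) (f i 0) else 0)"
    if x: "x<q" and th: "\<theta><q" for x c \<theta>
  proof -
    have "Q x (c*q + \<theta>) = (\<Sum>y\<in>Y. if \<sigma> y = c*q + \<theta> then W x y else 0)"
      unfolding Q_def using finY by (simp add: sum.inter_filter)
    also have "\<dots> = (\<Sum>p\<in>I. if \<sigma> (F p) = c*q + \<theta> then W x (F p) else 0)"
      by (rule sum.reindex_bij_betw[OF bijF, symmetric])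
    also have "\<dots> = (\<Sum>i<m. \<Sum>t<q. if \<sigma> (f i t) = c*q + \<theta> then W x (f i t) else 0)"
      unfolding I_def F_def by (simp add: sum.cartesian_product) (rule sum.cong, auto)
    also have "\<dots> = (\<Sum>i<m. if enc (bv i) = c then W ((x + (q - \<theta>) + jj i) mod q) (f i 0) else 0)"
    proof (rule sum.cong[OF refl])
      fix i assume i: "i \<in> {..<m}"
      have "(\<Sum>t<q. if \<sigma> (f i t) = c*q + \<theta> then W x (f i t) else 0)
          = (\<Sum>t<q. if enc (bv i) = c then (if (jj i + t) mod q = \<theta> then W x (f i t) else 0) else 0)"
      proof (rule sum.cong[OF refl])
        fix t assume t: "t \<in> {..<q}"
        have "\<sigma> (f i t) = c*q + \<theta> \<longleftrightarrow> enc (bv i) = c \<and> (jj i + t) mod q = \<theta>"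
          using \<sigma>F[of i t] i t div_mod_unique[of "(jj i + t) mod q" q \<theta> "enc (bv i)" c] th q0 by auto
        then show "(if \<sigma> (f i t) = c*q + \<theta> then W x (f i t) else 0)
          = (if enc (bv i) = c then (if (jj i + t) mod q = \<theta> then W x (f i t) else 0) else 0)" by auto
      qed
      also have "\<dots> = (if enc (bv i) = c then W x (f i ((\<theta> + (q - jj i)) mod q)) else 0)"
        using inner_delta[of "jj i" q \<theta> "\<lambda>t. W x (f i t)"] jj th by simp
      also have "\<dots> = (if enc (bv i) = c then W ((x + (q - \<theta>) + jj i) mod q) (f i 0) else 0)"
        using rot[of i x "(\<theta> + (q - jj i)) mod q"] M5[of x q \<theta> "jj i"] i x th jj q0 by simp
      finally show "(\<Sum>t<q. if \<sigma> (f i t) = c*q + \<theta> then W x (f i t) else 0) =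
          (if enc (bv i) = c then W ((x + (q - \<theta>) + jj i) mod q) (f i 0) else 0)" .
    qed
    finally show ?thesis .
  qed
  have cycZ: "cyclo_symmetric q Z Q"
    unfolding cyclo_symmetric_def
  proof (intro conjI exI[of _ Mc] exI[of _ "\<lambda>c \<theta>. c*q + \<theta>"])
    show "q dvd card Z" by (simp add: Z_def)
    show "bij_betw (\<lambda>(i, t). i*q + t) ({..<Mc} \<times> {..<q}) Z"
      unfolding bij_betw_def
    proof
      show "inj_on (\<lambda>(i, t). i*q + t) ({..<Mc} \<times> {..<q})"
        by (auto intro!: inj_onI dest: div_mod_unique)
      show "(\<lambda>(i, t). i*q + t) ` ({..<Mc} \<times> {..<q}) = Z"
      proof
        show "(\<lambda>(i, t). i*q + t) ` ({..<Mc} \<times> {..<q}) \<subseteq> Z" using lt by (auto simp: Z_def)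
        show "Z \<subseteq> (\<lambda>(i, t). i*q + t) ` ({..<Mc} \<times> {..<q})"
        proof
          fix z assume "z \<in> Z"
          then have z: "z < Mc * q" by (simp add: Z_def)
          have "z div q < Mc" using z q0 by (simp add: less_mult_imp_div_less)
          moreover have "z mod q < q" using q0 by simp
          moreover have "z = (z div q) * q + z mod q" by simp
          ultimately show "z \<in> (\<lambda>(i, t). i*q + t) ` ({..<Mc} \<times> {..<q})"
            by (intro rev_image_eqI[of "(z div q, z mod q)"]) auto
        qed
      qed
    qed
    show "\<forall>i<Mc. \<forall>x<q. \<forall>\<theta><q. Q x (i*q + 0) = Q ((x + \<theta>) mod q) (i*q + \<theta>)"
    proof (intro allI impI)
      fix c x \<theta> assume c: "c < Mc" and x: "x<q" and th: "\<theta><q"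
      have xt: "(x + \<theta>) mod q < q" using q0 by simp
      show "Q x (c*q + 0) = Q ((x + \<theta>) mod q) (c*q + \<theta>)"
        unfolding Qblock[OF x q0] Qblock[OF xt th]
        using M6[of x q \<theta>] x th jj by (intro sum.cong refl) auto
    qed
  qed
  have cellfact: "\<exists>i t. i<m \<and> t<q \<and> y = f i t \<and> (jj i + t) mod q = z mod q \<and> enc (bv i) = z div q"
    if y: "y \<in> Y" and sz: "\<sigma> y = z" for y z
  proof -
    obtain i t where it: "g y = (i, t)" by (cases "g y")
    with Fg[OF y] have i: "i<m" "t<q" and yy: "f i t = y" by (auto simp: I_def F_def)
    have e: "z = enc (bv i) * q + (jj i + t) mod q" using \<sigma>F[OF i] yy sz by simp
    have "z mod q = (jj i + t) mod q" using e by simp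
    moreover have "z div q = enc (bv i)" using e q0 by simp
    ultimately show ?thesis using i yy by metis
  qed
  have Qeq: "Q = (\<lambda>x z. \<Sum>y\<in>{y\<in>Y. \<sigma> y = z}. W x y)" by (simp add: Q_def fun_eq_iff)
  have loss: "mutual_info q Y (uniform q) W - mutual_info q Z (uniform q) Q \<le> 9/4*(real q^2-1)/(real N)^2"
    unfolding Qeq
  proof (rule loss_bound[OF assms(1) q0 finZ \<sigma>Z Npos])
    fix z assume zZ: "z \<in> Z"
    define j where "j = z mod q"
    have jq: "j < q" using q0 by (simp add: j_def)
    have part1: "W j y \<ge> (\<Sum>x<q. W x y) / q" if y: "y \<in> Y" and sz: "\<sigma> y = z" for y
    proof -
      obtain i t where i: "i<m" "t<q" and yy: "y = f i t" and jt: "(jj i + t) mod q = j"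
        and ec: "enc (bv i) = z div q" using cellfact[OF y sz] unfolding j_def by blast
      have "W j y = W (jj i) (f i 0)"
        using rot[OF i(1) jq i(2)] M2[of "jj i" q t] jj i yy jt by simp
      moreover have "(\<Sum>x<q. W x y) = s0 i" using ssum[OF i] yy by simp
      moreover have "s0 i \<le> real q * W (jj i) (f i 0)"
      proof -
        have "s0 i \<le> (\<Sum>x<q. W (jj i) (f i 0))" unfolding s0_def using jj by (intro sum_mono) auto
        then show ?thesis by simp
      qed
      ultimately show ?thesis using q0 by (simp add: field_simps)
    qed
    have part2: "\<exists>k::nat. \<forall>y\<in>Y. \<sigma> y = z \<longrightarrow> (\<Sum>x<q. W x y) > 0 \<longrightarrow>
            (real k)^2/(real N)^2 \<le> W x y / (\<Sum>x<q. W x y) \<and> W x y / (\<Sum>x<q. W x y) \<le> (real k+1)^2/(real N)^2"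
      if x: "x<q" and xj: "x \<noteq> j" for x
    proof (cases "\<exists>y\<in>Y. \<sigma> y = z")
      case False then show ?thesis by blast
    next
      case True
      then obtain y0 where y0: "y0 \<in> Y" "\<sigma> y0 = z" by blast
      obtain i0 t0 where i0: "i0<m" "t0<q" and e0: "enc (bv i0) = z div q"
        using cellfact[OF y0] by blast
      define d where "d = (x + (q - j)) mod q"
      have d: "d \<in> {1..<q}" unfolding d_def using M4[of x q j] x jq xj by simp
      show ?thesis
      proof (intro exI[of _ "bv i0 d"] ballI impI)
        fix y assume y: "y \<in> Y" and sz: "\<sigma> y = z" and spos: "(\<Sum>x<q. W x y) > 0"
        obtain i t where i: "i<m" "t<q" and yy: "y = f i t" and jt: "(jj i + t) mod q = j"
          and ec: "enc (bv i) = z div q" using cellfact[OF y sz] unfolding j_def by blast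
        have bveq: "bv i = bv i0"
          using enc bvB[OF i(1)] bvB[OF i0(1)] ec e0 unfolding bij_betw_def inj_on_def by metis
        have k: "bv i0 d = nat \<lfloor>real N * sqrt (post i ((jj i + d) mod q))\<rfloor>"
        proof -
          have "bv i0 d = bv i d" using bveq by simp
          also have "bv i d = nat \<lfloor>real N * sqrt (post i ((jj i + d) mod q))\<rfloor>"
            using d unfolding bv_def by (simp only: restrict_apply' )
          finally show ?thesis .
        qed
        have "W x y / (\<Sum>x<q. W x y) = post i ((x + (q - t)) mod q)"
          using rot[OF i(1) x i(2)] ssum[OF i] yy by (simp add: post_def)
        also have "(x + (q - t)) mod q = (jj i + d) mod q"
          using M3[of x q t "jj i"] x i jj jt by (simp add: d_def)
        finally have eq: "W x y / (\<Sum>x<q. W x y) = post i ((jj i + d) mod q)" .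
        have "(jj i + d) mod q < q" using q0 by simp
        then show "(real (bv i0 d))^2/(real N)^2 \<le> W x y / (\<Sum>x<q. W x y) \<and>
            W x y / (\<Sum>x<q. W x y) \<le> (real (bv i0 d)+1)^2/(real N)^2"
          unfolding eq k using bin_floor[OF Npos post_nn[OF i(1)]] by blast
      qed
    qed
    show "\<exists>j<q. (\<forall>y\<in>Y. \<sigma> y = z \<longrightarrow> (\<Sum>x<q. W x y) > 0 \<longrightarrow> W j y \<ge> (\<Sum>x<q. W x y) / q) \<and>
        (\<forall>x<q. x \<noteq> j \<longrightarrow> (\<exists>k::nat. \<forall>y\<in>Y. \<sigma> y = z \<longrightarrow> (\<Sum>x<q. W x y) > 0 \<longrightarrow>
            (real k)^2/(real N)^2 \<le> W x y / (\<Sum>x<q. W x y) \<and> W x y / (\<Sum>x<q. W x y) \<le> (real k+1)^2/(real N)^2))"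
      using part1 part2 jq by blast
  qed
  show ?thesis using loss Nb chZ degr cardZ cycZ by (intro exI[of _ Z] exI[of _ Q]) auto
qed


end
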